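(* Let $\theta>0$ and $n\ge 3$. Let $\eta=(\eta_n,\ldots,\eta_1)$ be the random vector whose law is that of $(\xi_n,\ldots,\xi_1)$ conditioned on the event $\{(\xi_n,\ldots,\xi_1)\in\Delta_n\}$, and set $\eta_{n+1}=1$. Then: (i) The sequence $\eta_{n+1}=1,\eta_n,\eta_{n-1},\ldots,\eta_2,\eta_1$ (in this order) is a non-homogeneous Markov chain on $\{0,1\}$. Its transitions are as follows. $\eta_n=0$ almost surely. For $r=3,\ldots,n-1$, $$\mathbb{P}(\eta_r=0\mid \eta_{r+1}=0)=\frac{(\theta+r-1)\lambda_r(\theta)}{(\theta+r-1)\lambda_r(\theta)+\theta\lambda_{r-1}(\theta)},\qquad \mathbb{P}(\eta_r=1\mid \eta_{r+1}=0)=\frac{\theta\lambda_{r-1}(\theta)}{(\theta+r-1)\lambda_r(\theta)+\theta\lambda_{r-1}(\theta)},$$ $$\mathbb{P}(\eta_r=0\mid \eta_{r+1}=1)=1,\qquad \mathbb{P}(\eta_r=1\mid \eta_{r+1}=1)=0.$$ Moreover $\eta_2=0$ almost surely and $\eta_1=1$ almost surely. (ii) For $j=2,\ldots,n$, let $\tilde C_j(n)$ be the number of $j$-spacings in the sequence $1\,\eta_n\,\eta_{n-1}\cdots\eta_2\,\eta_1$. Then $(\tilde C_2(n),\ldots,\tilde C_n(n))$ has the law of $(C_2(n),\ldots,C_n(n))$ conditioned on $C_1(n)=0$, where $(C_1(n),\ldots,C_n(n))\sim \mathrm{ESF}(\theta)$.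
   Context: Fix $\theta>0$. Write $\theta_{(0)}=1$ and $\theta_{(m)}=\theta(\theta+1)\cdots(\theta+m-1)$ for $m\ge1$. The Ewens Sampling Formula $\mathrm{ESF}(\theta)$ is the law of a random vector $(C_1(n),\ldots,C_n(n))$ of nonnegative integers with $$\mathbb{P}(C_1(n)=c_1,\ldots,C_n(n)=c_n)=\frac{n!}{\theta_{(n)}}\prod_{j=1}^n\Big(\frac{\theta}{j}\Big)^{c_j}\frac{1}{c_j!}\quad\text{whenever } \textstyle\sum_j jc_j=n$$ (these are the cycle counts of a random permutation of $\{1,\ldots,n\}$ chosen with probability $\theta^{k}/\theta_{(n)}$ when it has $k$ cycles). For $n\ge1$ let $\lambda_n(\theta)=\mathbb{P}(C_1(n)=0)=\frac{n!}{\theta_{(n)}}\sum_{j=0}^n(-1)^j\frac{\theta^j}{j!}\frac{\theta_{(n-j)}}{(n-j)!}$, and $\lambda_0(\theta)=1$; note $\lambda_1(\theta)=0$. Let $\xi_1,\xi_2,\ldots$ be independent Bernoulli random variables with $\mathbb{P}(\xi_i=1)=\theta/(\theta+i-1)$, $\mathbb{P}(\xi_i=0)=(i-1)/(\theta+i-1)$ (so $\xi_1=1$). For $n\ge2$, $\Delta_n$ is the set of $(a_n,a_{n-1},\ldots,a_1)\in\{0,1\}^n$ with $a_n=0$, $a_1=1$, and no index $2\le i\le n$ with $a_i=a_{i-1}=1$. (One has $\mathbb{P}((\xi_n,\ldots,\xi_1)\in\Delta_n)=\lambda_n(\theta)$.) For a finite $\{0,1\}$-sequence, a $j$-spacing is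 an occurrence of two consecutive 1s separated by exactly $j-1$ zeros, i.e. an occurrence of the pattern $1\,0^{j-1}\,1$. *)

theory Defs
  imports "HOL-Probability.Probability"
begin

text \<open>lambda_n(theta) = P(C_1(n) = 0) under ESF(theta), by the explicit formula;
  the rising factorial theta_(m) is pochhammer theta m.\<close>
definition lam :: "real \<Rightarrow> nat \<Rightarrow> real" where
  "lam \<theta> n = (if n = 0 then 1 else
     fact n / pochhammer \<theta> n *
     (\<Sum>j=0..n. (-1)^j * \<theta>^j / fact j * pochhammer \<theta> (n - j) / fact (n - j)))"

text \<open>Law of (xi_1,...,xi_n), as a random function {1..n} -> bool (False outside {1..n}),
  xi_i = 1 encoded as True.\<close>
definition xi_pmf :: "real \<Rightarrow> nat \<Rightarrow> (nat \<Rightarrow> bool) pmf" where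
  "xi_pmf \<theta> n = Pi_pmf {1..n} False (\<lambda>i. bernoulli_pmf (\<theta> / (\<theta> + real i - 1)))"

definition Delta :: "nat \<Rightarrow> (nat \<Rightarrow> bool) set" where
  "Delta n = {a. \<not> a n \<and> a 1 \<and> (\<forall>i\<in>{2..n}. \<not> (a i \<and> a (i - 1)))}"

definition eta_pmf :: "real \<Rightarrow> nat \<Rightarrow> (nat \<Rightarrow> bool) pmf" where
  "eta_pmf \<theta> n = cond_pmf (xi_pmf \<theta> n) (Delta n)"

definition eta_ext :: "nat \<Rightarrow> (nat \<Rightarrow> bool) \<Rightarrow> nat \<Rightarrow> bool" where
  "eta_ext n a = a(n + 1 := True)"

text \<open>Transition probability P(eta_r = b | eta_{r+1} = c).\<close>
definition trans_prob :: "real \<Rightarrow> nat \<Rightarrow> bool \<Rightarrow> bool \<Rightarrow> real" where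
  "trans_prob \<theta> r c b =
     (if c then (if b then 0 else 1)
      else (let D = (\<theta> + real r - 1) * lam \<theta> r + \<theta> * lam \<theta> (r - 1) in
            if b then \<theta> * lam \<theta> (r - 1) / D else (\<theta> + real r - 1) * lam \<theta> r / D))"

text \<open>Number of j-spacings (occurrences of 1 0^(j-1) 1) in the sequence
  1 eta_n ... eta_1, i.e. in eta_ext read at positions n+1 down to 1.\<close>
definition spacings :: "nat \<Rightarrow> (nat \<Rightarrow> bool) \<Rightarrow> nat \<Rightarrow> nat" where
  "spacings n a j = card {i \<in> {j+1..n+1}.
     eta_ext n a i \<and> eta_ext n a (i - j) \<and> (\<forall>k\<in>{i-j+1..i-1}. \<not> eta_ext n a k)}"

text \<open>Ewens Sampling Formula: support and point probabilities of (C_1(n),...,C_n(n)),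
  count vectors encoded as functions nat -> nat vanishing outside {1..n}.\<close>
definition esf_space :: "nat \<Rightarrow> (nat \<Rightarrow> nat) set" where
  "esf_space n = {c. (\<forall>k. k \<notin> {1..n} \<longrightarrow> c k = 0) \<and> (\<Sum>j=1..n. j * c j) = n}"

definition esf_weight :: "real \<Rightarrow> nat \<Rightarrow> (nat \<Rightarrow> nat) \<Rightarrow> real" where
  "esf_weight \<theta> n c = fact n / pochhammer \<theta> n *
     (\<Prod>j=1..n. (\<theta> / real j) ^ c j / fact (c j))"

definition esf_prob :: "real \<Rightarrow> nat \<Rightarrow> (nat \<Rightarrow> nat) set \<Rightarrow> real" where
  "esf_prob \<theta> n A = (\<Sum>c\<in>esf_space n \<inter> A. esf_weight \<theta> n c)"

end

theory Submission
  imports Defs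
begin


definition pp :: "real \<Rightarrow> nat \<Rightarrow> bool pmf" where
  "pp \<theta> i = bernoulli_pmf (\<theta> / (\<theta> + real i - 1))"

definition Q :: "real \<Rightarrow> nat set \<Rightarrow> (nat \<Rightarrow> bool) pmf" where
  "Q \<theta> A = Pi_pmf A False (pp \<theta>)"

definition restr :: "nat set \<Rightarrow> (nat \<Rightarrow> bool) \<Rightarrow> nat \<Rightarrow> bool" where
  "restr A f = (\<lambda>x. if x \<in> A then f x else False)"

lemma xi_Q: "xi_pmf \<theta> n = Q \<theta> {1..n}"
  by (simp add: xi_pmf_def Q_def pp_def[abs_def])

lemma prob_cong_set:
  assumes "\<And>f. f \<in> set_pmf M \<Longrightarrow> f \<in> X \<longleftrightarrow> f \<in> Y"
  shows "measure_pmf.prob M X = measure_pmf.prob M Y"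
  by (rule measure_prob_cong_0) (use assms in \<open>auto simp: set_pmf_eq\<close>)

definition V :: "nat \<Rightarrow> (nat \<Rightarrow> bool) set" where
  "V r = {a. a 1 \<and> (\<forall>i\<in>{2..r}. \<not> (a i \<and> a (i - 1)))}"

lemma split_top: "r \<ge> 1 \<Longrightarrow> {1..r} = {1..r-1} \<union> {r::nat}" by auto

lemma V_Suc: "r \<ge> 2 \<Longrightarrow> f \<in> V r \<longleftrightarrow> f \<in> V (r-1) \<and> \<not> (f r \<and> f (r - 1))"
proof -
  assume r: "r \<ge> 2"
  have "{2..r} = {2..r-1} \<union> {r}" using r by auto
  thus ?thesis unfolding V_def by auto
qed

lemma Delta_V: "f \<in> Delta r \<longleftrightarrow> f \<in> V r \<and> \<not> f r"
  by (auto simp: V_def Delta_def)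

lemma restr_V: "r \<ge> 1 \<Longrightarrow> restr {1..r} f \<in> V r \<longleftrightarrow> f \<in> V r"
proof -
  assume "r \<ge> 1"
  have h: "\<forall>i\<in>{2..r}. i - 1 \<in> {1..r} \<and> i \<in> {1..r}" by auto
  show ?thesis unfolding V_def restr_def using h \<open>r \<ge> 1\<close> by auto
qed

lemma restr_Delta: "r \<ge> 1 \<Longrightarrow> restr {1..r} f \<in> Delta r \<longleftrightarrow> f \<in> Delta r"
  using restr_V[of r f] by (simp add: Delta_V restr_def)

context fixes \<theta> :: real assumes th: "\<theta> > 0" begin

lemma pp_True: "i \<ge> 1 \<Longrightarrow> pmf (pp \<theta> i) True = \<theta> / (\<theta> + real i - 1)"
  using th by (simp add: pp_def)

lemma pp_False: "i \<ge> 1 \<Longrightarrow> pmf (pp \<theta> i) False = (real i - 1) / (\<theta> + real i - 1)"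
  using th by (simp add: pp_def field_simps)

lemma pp1: "set_pmf (pp \<theta> 1) = {True}"
proof -
  have "set_pmf (bernoulli_pmf (1::real)) = {True}"
    by (auto simp: set_pmf_eq pmf_bernoulli_False) (metis (full_types) diff_self pmf_bernoulli_False order_refl zero_le_one)
  thus ?thesis using th by (simp add: pp_def)
qed

lemma supp_Q:
  assumes "finite A" "f \<in> set_pmf (Q \<theta> A)"
  shows "\<forall>x. x \<notin> A \<longrightarrow> \<not> f x" and "1 \<in> A \<Longrightarrow> f 1"
  using assms set_Pi_pmf[OF assms(1), of False "pp \<theta>"] pp1
  by (auto simp: Q_def PiE_dflt_def)

lemma indep:
  assumes "finite A" "finite B" "A \<inter> B = {}"
    and "\<And>f. f \<in> set_pmf (Q \<theta> (A \<union> B)) \<Longrightarrow> f \<in> X \<longleftrightarrow> P (restr A f) \<and> R (restr B f)"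
  shows "measure_pmf.prob (Q \<theta> (A \<union> B)) X
       = measure_pmf.prob (Q \<theta> A) {f. P f} * measure_pmf.prob (Q \<theta> B) {f. R f}"
proof -
  let ?h = "\<lambda>(f::nat\<Rightarrow>bool,g::nat\<Rightarrow>bool) x. if x \<in> A then f x else g x"
  let ?M = "pair_pmf (Q \<theta> A) (Q \<theta> B)"
  have U: "Q \<theta> (A \<union> B) = map_pmf ?h ?M"
    unfolding Q_def by (rule Pi_pmf_union[OF assms(1-3)])
  let ?SP = "{f \<in> set_pmf (Q \<theta> A). P f}" and ?SR = "{f \<in> set_pmf (Q \<theta> B). R f}"
  have "measure_pmf.prob (Q \<theta> (A \<union> B)) X = measure_pmf.prob ?M (?h -` X)"
    by (simp add: U)
  also have "\<dots> = measure_pmf.prob ?M (?SP \<times> ?SR)"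
  proof (rule prob_cong_set)
    fix z assume z: "z \<in> set_pmf ?M"
    obtain f g where fg: "z = (f,g)" by (cases z)
    have f: "f \<in> set_pmf (Q \<theta> A)" and g: "g \<in> set_pmf (Q \<theta> B)" using z fg by auto
    have hz: "?h z \<in> set_pmf (Q \<theta> (A \<union> B))" using z U by simp
    have r1: "restr A (?h z) = f" using supp_Q(1)[OF assms(1) f] fg
      by (auto simp: restr_def fun_eq_iff)
    have r2: "restr B (?h z) = g" using supp_Q(1)[OF assms(2) g] fg assms(3)
      by (auto simp: restr_def fun_eq_iff)
    show "z \<in> ?h -` X \<longleftrightarrow> z \<in> ?SP \<times> ?SR"
      using assms(4)[OF hz] r1 r2 f g fg by auto
  qed
  also have "\<dots> = measure_pmf.prob (Q \<theta> A) ?SP * measure_pmf.prob (Q \<theta> B) ?SR"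
    by (rule measure_pmf_prob_product) (auto intro: countable_subset[OF _ countable_set_pmf])
  also have "measure_pmf.prob (Q \<theta> A) ?SP = measure_pmf.prob (Q \<theta> A) {f. P f}"
    by (rule prob_cong_set) auto
  also have "measure_pmf.prob (Q \<theta> B) ?SR = measure_pmf.prob (Q \<theta> B) {f. R f}"
    by (rule prob_cong_set) auto
  finally show ?thesis .
qed

lemma point:
  assumes "finite A"
  shows "measure_pmf.prob (Q \<theta> A) {f. \<forall>i\<in>A. f i = z i} = (\<Prod>i\<in>A. pmf (pp \<theta> i) (z i))"
proof -
  have "measure_pmf.prob (Q \<theta> A) {f. \<forall>i\<in>A. f i = z i} = measure_pmf.prob (Q \<theta> A) {restr A z}"
    by (rule prob_cong_set) (use supp_Q(1)[OF assms] in \<open>auto simp: restr_def fun_eq_iff\<close>)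
  also have "\<dots> = (\<Prod>i\<in>A. pmf (pp \<theta> i) (z i))"
    using assms by (simp add: measure_pmf_single Q_def pmf_Pi restr_def)
  finally show ?thesis .
qed


lemma single_True: "i \<ge> 1 \<Longrightarrow> measure_pmf.prob (Q \<theta> {i}) {f. f i} = \<theta> / (\<theta> + real i - 1)"
  using point[of "{i}" "\<lambda>_. True"] pp_True by simp

lemma single_False: "i \<ge> 1 \<Longrightarrow> measure_pmf.prob (Q \<theta> {i}) {f. \<not> f i} = (real i - 1) / (\<theta> + real i - 1)"
  using point[of "{i}" "\<lambda>_. False"] pp_False by simp

lemma probA: assumes "r \<ge> 2"
  shows "measure_pmf.prob (Q \<theta> {1..r}) {a\<in>V r. a r}
     = \<theta> / (\<theta> + real r - 1) * measure_pmf.prob (Q \<theta> {1..r-1}) (Delta (r-1))"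
proof -
  have "measure_pmf.prob (Q \<theta> ({1..r-1} \<union> {r})) {a\<in>V r. a r}
     = measure_pmf.prob (Q \<theta> {1..r-1}) {f. f \<in> Delta (r-1)} * measure_pmf.prob (Q \<theta> {r}) {f. f r}"
  proof (rule indep)
    fix f :: "nat \<Rightarrow> bool"
    show "f \<in> {a \<in> V r. a r} \<longleftrightarrow> restr {1..r - 1} f \<in> Delta (r - 1) \<and> restr {r} f r"
      using assms restr_Delta[of "r-1" f] V_Suc[of r f] Delta_V[of f "r-1"]
      by (auto simp: restr_def)
  qed auto
  thus ?thesis using split_top[of r] single_True[of r] assms by simp
qed

lemma probB: assumes "r \<ge> 2"
  shows "measure_pmf.prob (Q \<theta> {1..r}) (Delta r)
     = (real r - 1) / (\<theta> + real r - 1) * measure_pmf.prob (Q \<theta> {1..r-1}) (V (r-1))"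
proof -
  have "measure_pmf.prob (Q \<theta> ({1..r-1} \<union> {r})) (Delta r)
     = measure_pmf.prob (Q \<theta> {1..r-1}) {f. f \<in> V (r-1)} * measure_pmf.prob (Q \<theta> {r}) {f. \<not> f r}"
  proof (rule indep)
    fix f :: "nat \<Rightarrow> bool"
    show "f \<in> Delta r \<longleftrightarrow> restr {1..r - 1} f \<in> V (r - 1) \<and> \<not> restr {r} f r"
      using assms restr_V[of "r-1" f] V_Suc[of r f] Delta_V[of f r]
      by (auto simp: restr_def)
  qed auto
  thus ?thesis using split_top[of r] single_False[of r] assms by simp
qed

lemma probC: "measure_pmf.prob (Q \<theta> {1..r}) (V r)
   = measure_pmf.prob (Q \<theta> {1..r}) (Delta r) + measure_pmf.prob (Q \<theta> {1..r}) {a\<in>V r. a r}"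
proof -
  have e: "Delta r \<union> {a\<in>V r. a r} = V r" "Delta r \<inter> {a\<in>V r. a r} = {}"
    by (auto simp: V_def Delta_def)
  have "measure_pmf.prob (Q \<theta> {1..r}) (Delta r \<union> {a\<in>V r. a r})
     = measure_pmf.prob (Q \<theta> {1..r}) (Delta r) + measure_pmf.prob (Q \<theta> {1..r}) {a\<in>V r. a r}"
    by (rule measure_pmf.finite_measure_Union) (use e in auto)
  thus ?thesis by (simp only: e)
qed

lemma probV1: "measure_pmf.prob (Q \<theta> {1..1}) (V 1) = 1"
proof -
  have "measure_pmf.prob (Q \<theta> {1}) (V 1) = measure_pmf.prob (Q \<theta> {1}) {f. f 1}"
    by (rule prob_cong_set) (auto simp: V_def)
  thus ?thesis using single_True[of 1] th by simp
qed

lemma probD1: "measure_pmf.prob (Q \<theta> {1..1}) (Delta 1) = 0"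
  by (simp add: Delta_def)

end


definition tt :: "real \<Rightarrow> nat \<Rightarrow> real" where "tt \<theta> j = (-\<theta>)^j / fact j"
definition uu :: "real \<Rightarrow> nat \<Rightarrow> real" where "uu \<theta> m = pochhammer \<theta> m / fact m"
definition ss :: "real \<Rightarrow> nat \<Rightarrow> real" where "ss \<theta> n = (\<Sum>j\<le>n. tt \<theta> j * uu \<theta> (n - j))"

lemma uu_Suc: "real (Suc m) * uu \<theta> (Suc m) = (\<theta> + m) * uu \<theta> m"
proof -
  have "fact (Suc m) = real (Suc m) * (fact m :: real)" by (simp only: fact_Suc of_nat_mult)
  moreover have "real (Suc m) \<noteq> 0" by simp
  ultimately show ?thesis unfolding uu_def pochhammer_Suc by (simp add: field_simps del: of_nat_Suc)
qed
lemma tt_Suc: "real (Suc j) * tt \<theta> (Suc j) = - \<theta> * tt \<theta> j"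
proof -
  have "fact (Suc j) = real (Suc j) * (fact j :: real)" by (simp only: fact_Suc of_nat_mult)
  moreover have "real (Suc j) \<noteq> 0" by simp
  ultimately show ?thesis unfolding tt_def by (simp add: field_simps del: of_nat_Suc)
qed

lemma split_real: "j \<le> M \<Longrightarrow> real M * x = real (M - j) * x + real j * (x::real)"
  by (simp add: of_nat_diff algebra_simps)

lemma ss_rec:
  "real (Suc (Suc m)) * ss \<theta> (Suc (Suc m)) = real (Suc m) * ss \<theta> (Suc m) + \<theta> * ss \<theta> m"
proof -
  define N where "N = Suc m"
  have sN1: "real (Suc N) * ss \<theta> (Suc N) =
     (\<Sum>j\<le>Suc N. tt \<theta> j * (real (Suc N - j) * uu \<theta> (Suc N - j)))
   + (\<Sum>j\<le>Suc N. real j * tt \<theta> j * uu \<theta> (Suc N - j))"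
    unfolding ss_def sum_distrib_left sum.distrib[symmetric]
    by (intro sum.cong refl) (auto simp: split_real[of _ "Suc N"] algebra_simps)
  have p1: "(\<Sum>j\<le>Suc N. tt \<theta> j * (real (Suc N - j) * uu \<theta> (Suc N - j)))
      = (\<Sum>j\<le>N. tt \<theta> j * ((\<theta> + real (N - j)) * uu \<theta> (N - j)))"
  proof -
    have "(\<Sum>j\<le>Suc N. tt \<theta> j * (real (Suc N - j) * uu \<theta> (Suc N - j)))
       = (\<Sum>j\<le>N. tt \<theta> j * (real (Suc N - j) * uu \<theta> (Suc N - j)))"
      by (simp add: sum.atMost_Suc)
    also have "\<dots> = (\<Sum>j\<le>N. tt \<theta> j * ((\<theta> + real (N - j)) * uu \<theta> (N - j)))"
    proof (intro sum.cong refl)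
      fix j assume "j \<in> {..N}"
      hence "Suc N - j = Suc (N - j)" by auto
      thus "tt \<theta> j * (real (Suc N - j) * uu \<theta> (Suc N - j)) = tt \<theta> j * ((\<theta> + real (N - j)) * uu \<theta> (N - j))"
        by (simp only: \<open>Suc N - j = Suc (N - j)\<close> uu_Suc)
    qed
    finally show ?thesis .
  qed
  have p2: "(\<Sum>j\<le>Suc N. real j * tt \<theta> j * uu \<theta> (Suc N - j)) = - \<theta> * ss \<theta> N"
  proof -
    have "(\<Sum>j\<le>Suc N. real j * tt \<theta> j * uu \<theta> (Suc N - j))
        = (\<Sum>j\<le>N. real (Suc j) * tt \<theta> (Suc j) * uu \<theta> (Suc N - Suc j))"
      by (subst sum.atMost_Suc_shift) simp
    also have "\<dots> = - \<theta> * ss \<theta> N"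
      unfolding ss_def sum_distrib_left
      by (intro sum.cong refl) (simp add: tt_Suc[simplified])
    finally show ?thesis .
  qed
  have p3: "(\<Sum>j\<le>N. real j * tt \<theta> j * uu \<theta> (N - j)) = - \<theta> * ss \<theta> m"
  proof -
    have "(\<Sum>j\<le>N. real j * tt \<theta> j * uu \<theta> (N - j))
        = (\<Sum>j\<le>m. real (Suc j) * tt \<theta> (Suc j) * uu \<theta> (N - Suc j))"
      unfolding N_def by (subst sum.atMost_Suc_shift) simp
    also have "\<dots> = - \<theta> * ss \<theta> m"
      unfolding ss_def sum_distrib_left N_def
      by (intro sum.cong refl) (simp add: tt_Suc[simplified])
    finally show ?thesis .
  qed
  have "(\<Sum>j\<le>N. tt \<theta> j * ((\<theta> + real (N - j)) * uu \<theta> (N - j)))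
      = (\<theta> + real N) * ss \<theta> N - (\<Sum>j\<le>N. real j * tt \<theta> j * uu \<theta> (N - j))"
    unfolding ss_def sum_distrib_left sum_subtractf[symmetric]
    by (intro sum.cong refl) (auto simp: of_nat_diff algebra_simps)
  with sN1 p1 p2 p3 have "real (Suc N) * ss \<theta> (Suc N) = real N * ss \<theta> N + \<theta> * ss \<theta> m"
    by (simp add: algebra_simps)
  thus ?thesis by (simp add: N_def)
qed

lemma lam_ss: "lam \<theta> n = fact n / pochhammer \<theta> n * ss \<theta> n"
proof (cases "n = 0")
  case True thus ?thesis by (simp add: lam_def ss_def tt_def uu_def)
next
  case False
  have "(\<Sum>j=0..n. (-1)^j * \<theta>^j / fact j * pochhammer \<theta> (n - j) / fact (n - j)) = ss \<theta> n"
    unfolding ss_def atLeast0AtMost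
    by (intro sum.cong refl) (simp add: tt_def uu_def power_minus[of \<theta>])
  with False show ?thesis by (simp add: lam_def)
qed

lemma ss_01: "ss \<theta> 0 = 1" "ss \<theta> 1 = 0" "ss \<theta> 2 = \<theta> / 2"
  apply (simp_all add: ss_def tt_def uu_def numeral_2_eq_2 pochhammer_Suc)
  apply (simp add: algebra_simps)
  done



lemma alg1: "a \<noteq> 0 \<Longrightarrow> b \<noteq> 0 \<Longrightarrow> P \<noteq> 0 \<Longrightarrow> F \<noteq> 0 \<Longrightarrow>
  k * F / (P * a * b) * (k * s1 + t * s0) = k / b * (k * F / (P * a) * s1 + t / a * (F / P * (s0::real)))"
  by (simp add: field_simps)

lemma lam_rec: assumes th: "\<theta> > 0"
  shows "lam \<theta> (Suc (Suc n)) = real (Suc n) / (\<theta> + real n + 1) * (lam \<theta> (Suc n) + \<theta> / (\<theta> + real n) * lam \<theta> n)"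
proof -
  define P where "P = pochhammer \<theta> n"
  define F where "F = (fact n :: real)"
  have P: "P > 0" unfolding P_def using th by (simp add: pochhammer_pos)
  have F: "F > 0" unfolding F_def by simp
  have p1: "pochhammer \<theta> (Suc n) = P * (\<theta> + real n)" by (simp add: P_def pochhammer_Suc)
  have p2: "pochhammer \<theta> (Suc (Suc n)) = P * (\<theta> + real n) * (\<theta> + real n + 1)"
    by (subst pochhammer_Suc, subst p1) (simp add: algebra_simps)
  have f1: "fact (Suc n) = real (Suc n) * F" by (simp add: F_def)
  have f2: "fact (Suc (Suc n)) = real (Suc (Suc n)) * real (Suc n) * F" by (simp add: F_def)
  have r: "real (Suc (Suc n)) * ss \<theta> (Suc (Suc n)) = real (Suc n) * ss \<theta> (Suc n) + \<theta> * ss \<theta> n"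
    by (rule ss_rec)
  have "lam \<theta> (Suc (Suc n)) = real (Suc n) * F / (P * (\<theta> + real n) * (\<theta> + real n + 1)) * (real (Suc (Suc n)) * ss \<theta> (Suc (Suc n)))"
    unfolding lam_ss[of \<theta> "Suc (Suc n)"] p2 f2 by (simp add: mult_ac)
  also have "\<dots> = real (Suc n) * F / (P * (\<theta> + real n) * (\<theta> + real n + 1)) * (real (Suc n) * ss \<theta> (Suc n) + \<theta> * ss \<theta> n)"
    by (simp only: r)
  also have "\<dots> = real (Suc n) / (\<theta> + real n + 1) * (lam \<theta> (Suc n) + \<theta> / (\<theta> + real n) * lam \<theta> n)"
  proof -
    have "\<theta> + real n > 0" "\<theta> + real n + 1 > 0" using th by auto
    hence "\<theta> + real n \<noteq> 0" "\<theta> + real n + 1 \<noteq> 0" "P \<noteq> 0" "F \<noteq> 0" using P F by auto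
    thus ?thesis unfolding lam_ss[of \<theta> "Suc n"] lam_ss[of \<theta> n] p1 f1 P_def[symmetric] F_def[symmetric]
      by (rule alg1)
  qed
  finally show ?thesis .
qed

lemma lam_12: assumes th: "\<theta> > 0" shows "lam \<theta> 1 = 0" "lam \<theta> 2 = 1 / (\<theta> + 1)"
proof -
  have "ss \<theta> (Suc 0) = 0" "ss \<theta> (Suc (Suc 0)) = \<theta>/2" using ss_01[of \<theta>] by (simp_all add: numeral_2_eq_2)
  moreover have "\<theta> + \<theta> * \<theta> > 0" by (rule add_pos_pos[OF th mult_pos_pos[OF th th]])
  moreover have "\<theta> \<noteq> 0" "1 + \<theta> \<noteq> 0" using th by auto
  ultimately show "lam \<theta> 1 = 0" "lam \<theta> 2 = 1 / (\<theta> + 1)"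
    by (simp_all add: lam_ss numeral_2_eq_2 pochhammer_Suc field_simps)
qed

lemma qq_lam: assumes th: "\<theta> > 0"
  shows "r \<ge> 1 \<Longrightarrow> measure_pmf.prob (Q \<theta> {1..r}) (Delta r) = lam \<theta> r"
proof (induction r rule: nat_less_induct)
  case (1 r)
  show ?case
  proof (cases "r \<le> 2")
    case True
    then consider "r = 1" | "r = 2" using 1 by linarith
    thus ?thesis
    proof cases
      case 1 thus ?thesis using probD1[OF th] lam_12[OF th] by simp
    next
      case 2
      thus ?thesis using probB[OF th, of 2] probV1[OF th] lam_12[OF th] by simp
    qed
  next
    case False
    define n where "n = r - 2"
    have n: "r = Suc (Suc n)" "n \<ge> 1" using False by (auto simp: n_def)
    have IH1: "measure_pmf.prob (Q \<theta> {1..Suc n}) (Delta (Suc n)) = lam \<theta> (Suc n)"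
      using 1 n by simp
    have IH0: "measure_pmf.prob (Q \<theta> {1..n}) (Delta n) = lam \<theta> n"
      using 1 n by simp
    have "measure_pmf.prob (Q \<theta> {1..r}) (Delta r) = real (Suc n) / (\<theta> + real n + 1) * measure_pmf.prob (Q \<theta> {1..Suc n}) (V (Suc n))"
      using probB[OF th, of r] n by simp
    also have "measure_pmf.prob (Q \<theta> {1..Suc n}) (V (Suc n)) = lam \<theta> (Suc n) + \<theta> / (\<theta> + real n) * lam \<theta> n"
      using probC[OF th, of "Suc n"] probA[OF th, of "Suc n"] IH1 IH0 n by simp
    finally show ?thesis using lam_rec[OF th, of n] n by simp
  qed
qed



lemma V_split: "1 \<le> r \<Longrightarrow> r \<le> m \<Longrightarrow> f \<in> V m \<longleftrightarrow> f \<in> V r \<and> (\<forall>i\<in>{r+1..m}. \<not> (f i \<and> f (i - 1)))"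
proof -
  assume "1 \<le> r" "r \<le> m"
  hence "{2..m} = {2..r} \<union> {r+1..m}" by auto
  thus ?thesis unfolding V_def by auto
qed

lemma eta_ext_restr: "r + 1 \<le> k \<Longrightarrow> k \<le> n + 1 \<Longrightarrow> eta_ext n (restr {r+1..n} f) k = eta_ext n f k"
  by (auto simp: eta_ext_def restr_def)

lemma factor:
  assumes th: "\<theta> > 0" and r: "1 \<le> r" "r + 1 \<le> n"
  shows "measure_pmf.prob (Q \<theta> {1..n})
      {a. (\<forall>k\<in>{r+1..n+1}. eta_ext n a k = h k) \<and> a \<in> Delta n \<and> B (a r)}
    = measure_pmf.prob (Q \<theta> {r+1..n}) {u. (\<forall>k\<in>{r+1..n+1}. eta_ext n u k = h k) \<and> \<not> u n \<and> (\<forall>i\<in>{r+2..n}. \<not> (u i \<and> u (i - 1)))}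
    * measure_pmf.prob (Q \<theta> {1..r}) {l. l \<in> V r \<and> \<not> (h (r+1) \<and> l r) \<and> B (l r)}"
proof -
  have U: "{1..n} = {1..r} \<union> {r+1..n}" using r by auto
  have "measure_pmf.prob (Q \<theta> ({1..r} \<union> {r+1..n}))
      {a. (\<forall>k\<in>{r+1..n+1}. eta_ext n a k = h k) \<and> a \<in> Delta n \<and> B (a r)}
    = measure_pmf.prob (Q \<theta> {1..r}) {l. l \<in> V r \<and> \<not> (h (r+1) \<and> l r) \<and> B (l r)}
    * measure_pmf.prob (Q \<theta> {r+1..n}) {u. (\<forall>k\<in>{r+1..n+1}. eta_ext n u k = h k) \<and> \<not> u n \<and> (\<forall>i\<in>{r+2..n}. \<not> (u i \<and> u (i - 1)))}"
  proof (rule indep[OF th])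
    fix f :: "nat \<Rightarrow> bool"
    let ?l = "restr {1..r} f" and ?u = "restr {r+1..n} f"
    have l1: "?l \<in> V r \<longleftrightarrow> f \<in> V r" by (rule restr_V[OF r(1)])
    have l2: "?l r = f r" using r by (simp add: restr_def)
    have u1: "(\<forall>k\<in>{r+1..n+1}. eta_ext n ?u k = h k) \<longleftrightarrow> (\<forall>k\<in>{r+1..n+1}. eta_ext n f k = h k)"
      using eta_ext_restr[of r _ n f] by auto
    have u2: "?u n = f n" using r by (simp add: restr_def)
    have u3: "(\<forall>i\<in>{r+2..n}. \<not> (?u i \<and> ?u (i - 1))) \<longleftrightarrow> (\<forall>i\<in>{r+2..n}. \<not> (f i \<and> f (i - 1)))"
    proof -
      have "\<forall>i\<in>{r+2..n}. i \<in> {r+1..n} \<and> i - 1 \<in> {r+1..n}" by auto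
      thus ?thesis by (auto simp: restr_def)
    qed
    have D: "f \<in> Delta n \<longleftrightarrow> f \<in> V r \<and> \<not> (f (r+1) \<and> f r) \<and> (\<forall>i\<in>{r+2..n}. \<not> (f i \<and> f (i - 1))) \<and> \<not> f n"
    proof -
      have "{r+1..n} = insert (r+1) {r+2..n}" using r by auto
      thus ?thesis using Delta_V[of f n] V_split[OF r(1), of n f] r by auto
    qed
    have hr: "(\<forall>k\<in>{r+1..n+1}. eta_ext n f k = h k) \<Longrightarrow> f (r+1) = h (r+1)"
      using r by (auto simp: eta_ext_def dest: bspec[of _ _ "r+1"])
    show "f \<in> {a. (\<forall>k\<in>{r+1..n+1}. eta_ext n a k = h k) \<and> a \<in> Delta n \<and> B (a r)} \<longleftrightarrow>
        (?l \<in> V r \<and> \<not> (h (r+1) \<and> ?l r) \<and> B (?l r)) \<and>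
        ((\<forall>k\<in>{r+1..n+1}. eta_ext n ?u k = h k) \<and> \<not> ?u n \<and> (\<forall>i\<in>{r+2..n}. \<not> (?u i \<and> ?u (i - 1))))"
      using l1 l2 u1 u2 u3 D hr by auto
  qed auto
  thus ?thesis using U by (simp add: mult.commute)
qed



definition spv :: "nat \<Rightarrow> (nat \<Rightarrow> bool) \<Rightarrow> nat \<Rightarrow> nat" where
  "spv n a = (\<lambda>j. if j \<in> {1..n} then spacings n a j else 0)"

lemma sp_decomp:
  assumes m: "1 \<le> m" "m \<le> n" and a0: "\<forall>x. x \<notin> {1..n} \<longrightarrow> \<not> a x"
    and am: "a m" and top: "\<forall>i\<in>{m+1..n}. \<not> a i" and j: "j \<ge> 1"
  shows "spacings n a j = spacings (m-1) (restr {1..m-1} a) j + (if j = n+1-m then 1 else 0)"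
proof -
  define e where "e = eta_ext n a"
  define e' where "e' = eta_ext (m-1) (restr {1..m-1} a)"
  define P where "P = (\<lambda>e i. e i \<and> e (i - j) \<and> (\<forall>k\<in>{i-j+1..i-1}. \<not> e (k::nat)))"
  have agree: "\<And>k. 1 \<le> k \<Longrightarrow> k \<le> m \<Longrightarrow> e k = e' k"
    using m am by (auto simp: e_def e'_def eta_ext_def restr_def)
  have e_hi: "\<And>k. m < k \<Longrightarrow> k \<le> n \<Longrightarrow> \<not> e k" using top m by (auto simp: e_def eta_ext_def)
  have e_top: "e (n+1)" by (simp add: e_def eta_ext_def)
  have e_m: "e m" using am m by (simp add: e_def eta_ext_def)
  have S: "{i \<in> {j+1..n+1}. P e i} = {i \<in> {j+1..m}. P e' i} \<union> (if j = n+1-m then {n+1} else {})"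
  proof (rule set_eqI)
    fix i
    show "i \<in> {i \<in> {j+1..n+1}. P e i} \<longleftrightarrow> i \<in> {i \<in> {j+1..m}. P e' i} \<union> (if j = n+1-m then {n+1} else {})"
    proof (cases "i \<le> m")
      case True
      have "P e i \<longleftrightarrow> P e' i" if ji: "j+1 \<le> i"
      proof -
        have ag: "\<forall>k\<in>{i-j+1..i-1}. e k = e' k" using agree True by auto
        have "e i = e' i" "e (i-j) = e' (i-j)" using agree True ji by auto
        thus ?thesis unfolding P_def using ag by auto
      qed
      thus ?thesis using True m by auto
    next
      case gtm: False
      show ?thesis
      proof (cases "i \<le> n")
        case True thus ?thesis using gtm e_hi[of i] m by (auto simp: P_def)
      next
        case False2: False
        show ?thesis
        proof (cases "i = n + 1")
          case False thus ?thesis using False2 gtm m by auto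
        next
          case True
          have "P e (n+1) \<longleftrightarrow> j = n + 1 - m"
          proof
            assume p: "P e (n+1)"
            have "e (n+1-j)" using p by (simp add: P_def)
            moreover have "n+1-j \<le> n" using j by simp
            moreover have "\<not> (n+1-j > m)" using e_hi[of "n+1-j"] calculation by auto
            moreover have "\<not> (n+1-j < m)"
            proof
              assume "n+1-j < m"
              hence "m \<in> {n+1-j+1..n+1-1}" using m by auto
              thus False using p e_m by (auto simp: P_def)
            qed
            ultimately show "j = n + 1 - m" using m by auto
          next
            assume jm: "j = n + 1 - m"
            show "P e (n+1)" unfolding P_def using jm e_top e_m e_hi m by auto
          qed
          thus ?thesis using True m j by auto
        qed
      qed
    qed
  qed
  have "spacings n a j = card {i \<in> {j+1..n+1}. P e i}"
    by (simp add: spacings_def P_def e_def)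
  also have "\<dots> = card {i \<in> {j+1..m}. P e' i} + card (if j = n+1-m then {n+1} else {} :: nat set)"
    unfolding S using m by (intro card_Un_disjoint) auto
  also have "card {i \<in> {j+1..m}. P e' i} = spacings (m-1) (restr {1..m-1} a) j"
    using m by (simp add: spacings_def P_def e'_def)
  finally show ?thesis by simp
qed

lemma spv_decomp:
  assumes m: "1 \<le> m" "m \<le> n" and a0: "\<forall>x. x \<notin> {1..n} \<longrightarrow> \<not> a x"
    and am: "a m" and top: "\<forall>i\<in>{m+1..n}. \<not> a i"
  shows "spv n a = (\<lambda>j. spv (m-1) (restr {1..m-1} a) j + (if j = n+1-m then 1 else 0))"
proof
  fix j
  have z: "spacings (m-1) (restr {1..m-1} a) j = 0" if "j \<ge> m"
    using that m by (simp add: spacings_def)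
  show "spv n a j = spv (m-1) (restr {1..m-1} a) j + (if j = n+1-m then 1 else 0)"
  proof (cases "j \<in> {1..n}")
    case True
    thus ?thesis using sp_decomp[OF m a0 am top, of j] z m by (auto simp: spv_def)
  next
    case False
    thus ?thesis using m by (auto simp: spv_def)
  qed
qed


lemma upd_eq: fixes g c :: "nat \<Rightarrow> nat" shows "((\<lambda>k. g k + (if k = j then 1 else 0)) = c) \<longleftrightarrow> (c j \<ge> 1 \<and> g = c(j := c j - 1))"
proof
  assume h: "(\<lambda>k. g k + (if k = j then 1 else 0)) = c"
  have hk: "\<And>k. g k + (if k = j then 1 else 0) = c k" using h by (simp add: fun_eq_iff)
  have "g j + 1 = c j" using hk[of j] by simp
  hence "c j \<ge> 1" by linarith
  moreover have "g = c(j := c j - 1)"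
  proof
    fix k show "g k = (c(j := c j - 1)) k" using hk[of k] by (cases "k = j") auto
  qed
  ultimately show "c j \<ge> 1 \<and> g = c(j := c j - 1)" by simp
next
  assume "c j \<ge> 1 \<and> g = c(j := c j - 1)"
  thus "(\<lambda>k. g k + (if k = j then 1 else 0)) = c" by (auto simp: fun_eq_iff)
qed



lemma two_le_sum:
  fixes c :: "nat \<Rightarrow> nat"
  assumes "j \<in> {1..n}" "k \<in> {1..n}" "k \<noteq> j"
  shows "k * c k + j * c j \<le> (\<Sum>i=1..n. i * c i)"
proof -
  have "(\<Sum>i\<in>{j,k}. i * c i) \<le> (\<Sum>i=1..n. i * c i)"
    using assms by (intro sum_mono2) auto
  thus ?thesis using assms by simp
qed

lemma one_le_sum:
  fixes c :: "nat \<Rightarrow> nat"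
  assumes "j \<in> {1..n}"
  shows "j * c j \<le> (\<Sum>i=1..n. i * c i)"
  using assms by (intro member_le_sum) auto

lemma sum_upd:
  fixes c :: "nat \<Rightarrow> nat"
  assumes "j \<in> {1..n}" "c j \<ge> 1"
  shows "(\<Sum>i=1..n. i * (c(j := c j - 1)) i) + j = (\<Sum>i=1..n. i * c i)"
proof -
  have "(\<Sum>i=1..n. i * (c(j := c j - 1)) i) = j * (c j - 1) + (\<Sum>i\<in>{1..n}-{j}. i * c i)"
    using assms by (subst sum.remove[of _ j]) (auto intro!: sum.cong)
  moreover have "(\<Sum>i=1..n. i * c i) = j * c j + (\<Sum>i\<in>{1..n}-{j}. i * c i)"
    using assms by (subst sum.remove[of _ j]) auto
  moreover have "j * (c j - 1) + j = j * c j" using assms(2)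
    by (simp add: diff_mult_distrib2)
  ultimately show ?thesis by simp
qed

lemma mem_esf:
  fixes c :: "nat \<Rightarrow> nat"
  assumes j: "1 \<le> j" "j \<le> n" and cj: "c j \<ge> 1"
  shows "c \<in> esf_space n \<longleftrightarrow> c(j := c j - 1) \<in> esf_space (n - j)"
proof -
  let ?c' = "c(j := c j - 1)"
  have jn: "j \<in> {1..n}" using j by auto
  have su: "(\<Sum>i=1..n. i * ?c' i) + j = (\<Sum>i=1..n. i * c i)" using sum_upd[of j n c] jn cj by simp
  have ext: "(\<Sum>i=1..n-j. i * ?c' i) = (\<Sum>i=1..n. i * ?c' i)" if z: "\<forall>k. k \<notin> {1..n-j} \<longrightarrow> ?c' k = 0"
    by (rule sum.mono_neutral_left) (use z in auto)
  show ?thesis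
  proof
    assume c: "c \<in> esf_space n"
    have S: "(\<Sum>i=1..n. i * c i) = n" and z0: "\<forall>k. k \<notin> {1..n} \<longrightarrow> c k = 0"
      using c by (auto simp: esf_space_def)
    have z: "\<forall>k. k \<notin> {1..n-j} \<longrightarrow> ?c' k = 0"
    proof (intro allI impI)
      fix k assume k: "k \<notin> {1..n-j}"
      show "?c' k = 0"
      proof (cases "k \<in> {1..n}")
        case False thus ?thesis using z0 jn by auto
      next
        case True
        hence kb: "n - j < k" using k by auto
        show ?thesis
        proof (cases "k = j")
          case True
          have "j * c j \<le> n" using one_le_sum[OF jn, of c] S by simp
          have "c j < 2"
          proof (rule ccontr)
            assume "\<not> c j < 2"
            hence "j * 2 \<le> j * c j" by (intro mult_le_mono2) simp
            thus False using \<open>j * c j \<le> n\<close> kb True by linarith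
          qed
          thus ?thesis using True cj by simp
        next
          case False
          have "k * c k + j * c j \<le> n" using two_le_sum[OF jn \<open>k \<in> {1..n}\<close> False, of c] S by simp
          moreover have "j \<le> j * c j" using cj by simp
          ultimately have "k * c k \<le> n - j" by linarith
          moreover have "c k \<noteq> 0 \<Longrightarrow> k \<le> k * c k" by simp
          ultimately have "c k = 0" using kb by linarith
          thus ?thesis using False by simp
        qed
      qed
    qed
    moreover have "(\<Sum>i=1..n-j. i * ?c' i) = n - j" using ext[OF z] su S by simp
    ultimately show "?c' \<in> esf_space (n - j)" by (simp add: esf_space_def)
  next
    assume c': "?c' \<in> esf_space (n - j)"
    have z: "\<forall>k. k \<notin> {1..n-j} \<longrightarrow> ?c' k = 0" and S: "(\<Sum>i=1..n-j. i * ?c' i) = n - j"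
      using c' by (auto simp: esf_space_def)
    have "\<forall>k. k \<notin> {1..n} \<longrightarrow> c k = 0"
    proof (intro allI impI)
      fix k assume "k \<notin> {1..n}"
      hence "k \<noteq> j" "k \<notin> {1..n-j}" using jn by auto
      thus "c k = 0" using z by (metis fun_upd_other)
    qed
    moreover have "(\<Sum>i=1..n. i * c i) = n" using ext[OF z] su S j by simp
    ultimately show "c \<in> esf_space n" by (simp add: esf_space_def)
  qed
qed



lemma G_formula:
  assumes th: "\<theta> > 0" and m: "1 \<le> m" "m \<le> n"
  shows "(\<Prod>i\<in>{m..n}. pmf (pp \<theta> i) (i = m)) * pochhammer \<theta> n * fact (m-1)
       = \<theta> * fact (n-1) * pochhammer \<theta> (m-1)"
  using m(2)
proof (induction n rule: dec_induct)
  case base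
  have pm: "pochhammer \<theta> m = pochhammer \<theta> (m-1) * (\<theta> + real m - 1)"
    using m(1) pochhammer_Suc[of \<theta> "m-1"] by (simp add: of_nat_diff)
  have t: "(\<Prod>i\<in>{m..m}. pmf (pp \<theta> i) (i = m)) = \<theta> / (\<theta> + real m - 1)"
    using pp_True[OF th m(1)] by simp
  define D where "D = \<theta> + real m - 1"
  have D: "D \<noteq> 0" using th m(1) by (simp add: D_def)
  show ?case unfolding t pm D_def[symmetric] using D by simp
next
  case (step k)
  have k1: "k \<ge> 1" using step m by simp
  have "{m..Suc k} = insert (Suc k) {m..k}" using step by auto
  hence "(\<Prod>i\<in>{m..Suc k}. pmf (pp \<theta> i) (i = m)) = pmf (pp \<theta> (Suc k)) False * (\<Prod>i\<in>{m..k}. pmf (pp \<theta> i) (i = m))"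
    using step by simp
  also have "pmf (pp \<theta> (Suc k)) False = real k / (\<theta> + real k)"
    using pp_False[OF th, of "Suc k"] by simp
  finally have e: "(\<Prod>i\<in>{m..Suc k}. pmf (pp \<theta> i) (i = m)) = real k / (\<theta> + real k) * (\<Prod>i\<in>{m..k}. pmf (pp \<theta> i) (i = m))" .
  have fk: "fact (Suc k - 1) = real k * fact (k - 1)"
    using k1 by (metis Suc_diff_1 diff_Suc_1 fact_Suc less_le_trans zero_less_one of_nat_mult of_nat_fact le_less)
  have "\<theta> + real k > 0" using th by simp
  thus ?case using step.IH unfolding e fk pochhammer_Suc
    by (simp add: field_simps)
qed

definition wt :: "real \<Rightarrow> nat \<Rightarrow> nat \<Rightarrow> real" where
  "wt \<theta> k x = (\<theta> / real k) ^ x / fact x"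

lemma esf_weight_wt: "esf_weight \<theta> n c = fact n / pochhammer \<theta> n * (\<Prod>k=1..n. wt \<theta> k (c k))"
  by (simp add: esf_weight_def wt_def)

lemma wt_step: assumes "x \<ge> 1" "k \<ge> 1"
  shows "wt \<theta> k (x - 1) * \<theta> = wt \<theta> k x * (real k * real x)"
proof -
  obtain y where y: "x = Suc y" using assms by (cases x) auto
  have "fact (Suc y) = real (Suc y) * (fact y :: real)" by (simp only: fact_Suc of_nat_mult)
  moreover have "real k \<noteq> 0" "real (Suc y) \<noteq> 0" using assms by auto
  ultimately show ?thesis unfolding y wt_def by (simp add: field_simps del: of_nat_Suc)
qed

lemma prodw:
  assumes j: "j \<in> {1..n}" and cj: "c j \<ge> 1" and c': "c(j := c j - 1) \<in> esf_space (n - j)"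
  shows "(\<Prod>k=1..n-j. wt \<theta> k ((c(j := c j - 1)) k)) * \<theta> = (\<Prod>k=1..n. wt \<theta> k (c k)) * (real j * real (c j))"
proof -
  let ?c' = "c(j := c j - 1)"
  have z: "\<forall>k. k \<notin> {1..n-j} \<longrightarrow> ?c' k = 0" using c' by (simp add: esf_space_def)
  have "(\<Prod>k=1..n-j. wt \<theta> k (?c' k)) = (\<Prod>k=1..n. wt \<theta> k (?c' k))"
    by (rule prod.mono_neutral_left) (use z in \<open>auto simp: wt_def\<close>)
  also have "\<dots> = wt \<theta> j (c j - 1) * (\<Prod>k\<in>{1..n}-{j}. wt \<theta> k (c k))"
    using j by (subst prod.remove[of _ j]) (auto intro!: prod.cong)
  finally have a: "(\<Prod>k=1..n-j. wt \<theta> k (?c' k)) = wt \<theta> j (c j - 1) * (\<Prod>k\<in>{1..n}-{j}. wt \<theta> k (c k))" .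
  have b: "(\<Prod>k=1..n. wt \<theta> k (c k)) = wt \<theta> j (c j) * (\<Prod>k\<in>{1..n}-{j}. wt \<theta> k (c k))"
    using j by (subst prod.remove[of _ j]) auto
  have "wt \<theta> j (c j - 1) * \<theta> = wt \<theta> j (c j) * (real j * real (c j))"
    using wt_step[OF cj, of j \<theta>] j by simp
  thus ?thesis unfolding a b by (simp add: algebra_simps)
qed

lemma weight_id:
  assumes th: "\<theta> > 0" and j: "j \<in> {1..n}" and cj: "c j \<ge> 1" and c: "c \<in> esf_space n"
  shows "esf_weight \<theta> (n - j) (c(j := c j - 1)) * (\<Prod>i\<in>{n+1-j..n}. pmf (pp \<theta> i) (i = n+1-j))
       = esf_weight \<theta> n c * (real j * real (c j)) / real n"
proof -
  let ?c' = "c(j := c j - 1)"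
  have c': "?c' \<in> esf_space (n - j)" using mem_esf[of j n c] j cj c by auto
  define G where "G = (\<Prod>i\<in>{n+1-j..n}. pmf (pp \<theta> i) (i = n+1-j))"
  define Pw' where "Pw' = (\<Prod>k=1..n-j. wt \<theta> k (?c' k))"
  define Pw where "Pw = (\<Prod>k=1..n. wt \<theta> k (c k))"
  have g: "G * pochhammer \<theta> n * fact (n-j) = \<theta> * fact (n-1) * pochhammer \<theta> (n-j)"
  proof -
    have "Suc (n - j) \<le> n" using j by auto
    thus ?thesis using G_formula[OF th, of "n+1-j" n] j unfolding G_def by (simp add: Suc_diff_le)
  qed
  have p: "Pw' * \<theta> = Pw * (real j * real (c j))" unfolding Pw'_def Pw_def by (rule prodw[OF j cj c'])
  have fn: "fact n = real n * fact (n-1)" using j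
    by (metis Suc_diff_1 atLeastAtMost_iff fact_Suc le_less_trans less_numeral_extra(1) of_nat_fact of_nat_mult le_less)
  have pos: "pochhammer \<theta> n > 0" "pochhammer \<theta> (n-j) > 0" "real n > 0" "(fact (n-j)::real) > 0"
    using th j by (auto simp: pochhammer_pos)
  have "esf_weight \<theta> (n - j) ?c' * G = fact (n-j) / pochhammer \<theta> (n-j) * Pw' * G"
    by (simp add: esf_weight_wt Pw'_def)
  also have "\<dots> = Pw' * \<theta> * fact (n-1) / pochhammer \<theta> n"
    using g pos by (simp add: field_simps)
  also have "\<dots> = Pw * (real j * real (c j)) * fact (n-1) / pochhammer \<theta> n" by (simp only: p)
  also have "\<dots> = esf_weight \<theta> n c * (real j * real (c j)) / real n"
    unfolding esf_weight_wt Pw_def[symmetric] fn using pos by (simp add: field_simps)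
  finally show ?thesis unfolding G_def .
qed

lemma esf_sum:
  assumes th: "\<theta> > 0" and n: "n \<ge> 1"
  shows "(\<Sum>m\<in>{1..n}. (if c (n+1-m) \<ge> 1 then
            (if c(n+1-m := c (n+1-m) - 1) \<in> esf_space (m-1) then esf_weight \<theta> (m-1) (c(n+1-m := c (n+1-m) - 1)) else 0)
          else 0) * (\<Prod>i\<in>{m..n}. pmf (pp \<theta> i) (i = m)))
       = (if c \<in> esf_space n then esf_weight \<theta> n c else 0)"
  (is "(\<Sum>m\<in>{1..n}. ?f m) = _")
proof -
  have "(\<Sum>m\<in>{1..n}. ?f m) = (\<Sum>j\<in>{1..n}. ?f (n + 1 - j))"
    by (subst sum.atLeastAtMost_rev) simp
  also have "\<dots> = (\<Sum>j\<in>{1..n}. (if c j \<ge> 1 then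
            (if c(j := c j - 1) \<in> esf_space (n-j) then esf_weight \<theta> (n-j) (c(j := c j - 1)) else 0)
          else 0) * (\<Prod>i\<in>{n+1-j..n}. pmf (pp \<theta> i) (i = n+1-j)))"
  proof (intro sum.cong refl)
    fix j assume "j \<in> {1..n}"
    hence "n + 1 - (n + 1 - j) = j" "n + 1 - j - 1 = n - j" by auto
    thus "?f (n + 1 - j) = (if c j \<ge> 1 then
            (if c(j := c j - 1) \<in> esf_space (n-j) then esf_weight \<theta> (n-j) (c(j := c j - 1)) else 0)
          else 0) * (\<Prod>i\<in>{n+1-j..n}. pmf (pp \<theta> i) (i = n+1-j))" by simp
  qed
  also have "\<dots> = (if c \<in> esf_space n then esf_weight \<theta> n c else 0)"
  proof (cases "c \<in> esf_space n")
    case True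
    have "(\<Sum>j\<in>{1..n}. (if c j \<ge> 1 then
            (if c(j := c j - 1) \<in> esf_space (n-j) then esf_weight \<theta> (n-j) (c(j := c j - 1)) else 0)
          else 0) * (\<Prod>i\<in>{n+1-j..n}. pmf (pp \<theta> i) (i = n+1-j)))
        = (\<Sum>j\<in>{1..n}. esf_weight \<theta> n c / real n * (real j * real (c j)))"
    proof (intro sum.cong refl)
      fix j assume j: "j \<in> {1..n}"
      show "(if c j \<ge> 1 then
            (if c(j := c j - 1) \<in> esf_space (n-j) then esf_weight \<theta> (n-j) (c(j := c j - 1)) else 0)
          else 0) * (\<Prod>i\<in>{n+1-j..n}. pmf (pp \<theta> i) (i = n+1-j))
          = esf_weight \<theta> n c / real n * (real j * real (c j))"
      proof (cases "c j \<ge> 1")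
        case cj: True
        have "c(j := c j - 1) \<in> esf_space (n-j)" using mem_esf[of j n c] j cj True by auto
        thus ?thesis using weight_id[OF th j cj True] cj by simp
      next
        case False thus ?thesis by simp
      qed
    qed
    also have "\<dots> = esf_weight \<theta> n c / real n * real (\<Sum>j\<in>{1..n}. j * c j)"
      by (simp add: sum_distrib_left)
    also have "(\<Sum>j\<in>{1..n}. j * c j) = n" using True by (simp add: esf_space_def)
    finally show ?thesis using True n by simp
  next
    case False
    have "\<And>j. j \<in> {1..n} \<Longrightarrow> c j \<ge> 1 \<Longrightarrow> c(j := c j - 1) \<notin> esf_space (n-j)"
      using mem_esf False by auto
    thus ?thesis using False by (auto intro!: sum.neutral)
  qed
  finally show ?thesis .
qed



lemma top_prob:
  assumes th: "\<theta> > 0" and m: "1 \<le> m" "m \<le> n"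
  shows "measure_pmf.prob (Q \<theta> {m..n}) {u. u m \<and> (\<forall>i\<in>{m+1..n}. \<not> u i)} = (\<Prod>i\<in>{m..n}. pmf (pp \<theta> i) (i = m))"
proof -
  have "{u. u m \<and> (\<forall>i\<in>{m+1..n}. \<not> u i)} = {f. \<forall>i\<in>{m..n}. f i = (i = m)}"
  proof (rule set_eqI, rule iffI)
    fix u assume "u \<in> {u. u m \<and> (\<forall>i\<in>{m+1..n}. \<not> u i)}"
    hence u: "u m" "\<forall>i\<in>{m+1..n}. \<not> u i" by auto
    have "\<forall>i\<in>{m..n}. u i = (i = m)"
    proof
      fix i assume i: "i \<in> {m..n}"
      show "u i = (i = m)"
      proof (cases "i = m")
        case True thus ?thesis using u by simp
      next
        case False hence "i \<in> {m+1..n}" using i by auto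
        thus ?thesis using u False by auto
      qed
    qed
    thus "u \<in> {f. \<forall>i\<in>{m..n}. f i = (i = m)}" by simp
  next
    fix u assume "u \<in> {f. \<forall>i\<in>{m..n}. f i = (i = m)}"
    hence u: "\<forall>i\<in>{m..n}. u i = (i = m)" by auto
    show "u \<in> {u. u m \<and> (\<forall>i\<in>{m+1..n}. \<not> u i)}" using u m by auto
  qed
  thus ?thesis using point[OF th, of "{m..n}" "\<lambda>i. i = m"] by simp
qed

lemma top_event:
  assumes th: "\<theta> > 0" and m: "1 \<le> m" "m \<le> n"
  shows "measure_pmf.prob (Q \<theta> {1..n}) {a. spv n a = c \<and> a m \<and> (\<forall>i\<in>{m+1..n}. \<not> a i)}
    = measure_pmf.prob (Q \<theta> {1..m-1}) {l. c (n+1-m) \<ge> 1 \<and> spv (m-1) l = c(n+1-m := c (n+1-m) - 1)}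
      * measure_pmf.prob (Q \<theta> {m..n}) {u. u m \<and> (\<forall>i\<in>{m+1..n}. \<not> u i)}"
proof -
  have U: "{1..n} = {1..m-1} \<union> {m..n}" using m by auto
  have "measure_pmf.prob (Q \<theta> ({1..m-1} \<union> {m..n})) {a. spv n a = c \<and> a m \<and> (\<forall>i\<in>{m+1..n}. \<not> a i)}
    = measure_pmf.prob (Q \<theta> {1..m-1}) {l. c (n+1-m) \<ge> 1 \<and> spv (m-1) l = c(n+1-m := c (n+1-m) - 1)}
      * measure_pmf.prob (Q \<theta> {m..n}) {u. u m \<and> (\<forall>i\<in>{m+1..n}. \<not> u i)}"
  proof (rule indep[OF th])
    fix f assume f: "f \<in> set_pmf (Q \<theta> ({1..m-1} \<union> {m..n}))"
    have a0: "\<forall>x. x \<notin> {1..n} \<longrightarrow> \<not> f x" using supp_Q(1)[OF th _ f] U by auto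
    have r: "(restr {m..n} f m \<and> (\<forall>i\<in>{m+1..n}. \<not> restr {m..n} f i)) \<longleftrightarrow> (f m \<and> (\<forall>i\<in>{m+1..n}. \<not> f i))"
      using m by (auto simp: restr_def)
    show "f \<in> {a. spv n a = c \<and> a m \<and> (\<forall>i\<in>{m+1..n}. \<not> a i)} \<longleftrightarrow>
      (c (n+1-m) \<ge> 1 \<and> spv (m-1) (restr {1..m-1} f) = c(n+1-m := c (n+1-m) - 1)) \<and>
      (restr {m..n} f m \<and> (\<forall>i\<in>{m+1..n}. \<not> restr {m..n} f i))"
    proof (cases "f m \<and> (\<forall>i\<in>{m+1..n}. \<not> f i)")
      case True
      have "spv n f = (\<lambda>j. spv (m-1) (restr {1..m-1} f) j + (if j = n+1-m then 1 else 0))"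
        using spv_decomp[OF m a0] True by auto
      have "f \<in> {a. spv n a = c \<and> a m \<and> (\<forall>i\<in>{m+1..n}. \<not> a i)} \<longleftrightarrow> spv n f = c"
        using True by simp
      also have "\<dots> \<longleftrightarrow> (\<lambda>j. spv (m-1) (restr {1..m-1} f) j + (if j = n+1-m then 1 else 0)) = c"
        by (simp only: \<open>spv n f = _\<close>)
      also have "\<dots> \<longleftrightarrow> c (n+1-m) \<ge> 1 \<and> spv (m-1) (restr {1..m-1} f) = c(n+1-m := c (n+1-m) - 1)"
        by (rule upd_eq)
      finally show ?thesis using True r by simp
    next
      case False thus ?thesis using r by auto
    qed
  qed auto
  thus ?thesis using U by simp
qed

lemma feller:
  assumes th: "\<theta> > 0"
  shows "measure_pmf.prob (Q \<theta> {1..n}) {a. spv n a = c} = (if c \<in> esf_space n then esf_weight \<theta> n c else 0)"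
proof (induction n arbitrary: c rule: less_induct)
  case (less n)
  show ?case
  proof (cases "n = 0")
    case True
    have "esf_space 0 = {\<lambda>_. 0}" by (auto simp: esf_space_def)
    moreover have "spv 0 a = (\<lambda>_. 0)" for a by (simp add: spv_def)
    moreover have "Q \<theta> {1..0} = return_pmf (\<lambda>_. False)" by (simp add: Q_def)
    moreover have "esf_weight \<theta> 0 c = 1" by (simp add: esf_weight_def)
    ultimately show ?thesis using True
      by (cases "c = (\<lambda>_. 0)") (auto simp: indicator_def)
  next
    case False
    hence n: "n \<ge> 1" by simp
    have aux: "measure_pmf.prob (Q \<theta> {1..k}) {l. b \<and> spv k l = c''} = (if b then (if c'' \<in> esf_space k then esf_weight \<theta> k c'' else 0) else 0)"
      if "k < n" for k b c''
    proof (cases b)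
      case True thus ?thesis using less.IH[OF that, of c''] by simp
    qed simp
    define E where "E = (\<lambda>m. {a. spv n a = c \<and> a m \<and> (\<forall>i\<in>{m+1..n}. \<not> a i)})"
    have "measure_pmf.prob (Q \<theta> {1..n}) {a. spv n a = c} = measure_pmf.prob (Q \<theta> {1..n}) (\<Union>m\<in>{1..n}. E m)"
    proof (rule prob_cong_set)
      fix f assume f: "f \<in> set_pmf (Q \<theta> {1..n})"
      have f1: "f 1" using supp_Q(2)[OF th _ f] n by auto
      define M where "M = Max {i\<in>{1..n}. f i}"
      have fin: "finite {i\<in>{1..n}. f i}" and ne: "{i\<in>{1..n}. f i} \<noteq> {}" using f1 n by auto
      have M: "M \<in> {1..n}" "f M" using Max_in[OF fin ne] by (auto simp: M_def)
      have top: "\<forall>i\<in>{M+1..n}. \<not> f i"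
      proof (intro ballI notI)
        fix i assume i: "i \<in> {M+1..n}" "f i"
        hence "i \<le> M" using Max_ge[OF fin, of i] by (auto simp: M_def)
        thus False using i by auto
      qed
      show "f \<in> {a. spv n a = c} \<longleftrightarrow> f \<in> (\<Union>m\<in>{1..n}. E m)"
      proof
        assume "f \<in> {a. spv n a = c}"
        hence "f \<in> E M" using M top by (simp add: E_def)
        thus "f \<in> (\<Union>m\<in>{1..n}. E m)" using M(1) by blast
      next
        assume "f \<in> (\<Union>m\<in>{1..n}. E m)"
        thus "f \<in> {a. spv n a = c}" by (auto simp: E_def)
      qed
    qed
    also have "\<dots> = (\<Sum>m\<in>{1..n}. measure_pmf.prob (Q \<theta> {1..n}) (E m))"
    proof (rule measure_pmf.finite_measure_finite_Union)
      show "disjoint_family_on E {1..n}"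
        unfolding disjoint_family_on_def E_def
      proof (intro ballI impI)
        fix m1 m2 :: nat assume "m1 \<in> {1..n}" "m2 \<in> {1..n}" "m1 \<noteq> m2"
        hence "m1 < m2 \<and> m2 \<in> {m1+1..n} \<or> m2 < m1 \<and> m1 \<in> {m2+1..n}" by auto
        thus "{a. spv n a = c \<and> a m1 \<and> (\<forall>i\<in>{m1+1..n}. \<not> a i)} \<inter> {a. spv n a = c \<and> a m2 \<and> (\<forall>i\<in>{m2+1..n}. \<not> a i)} = {}"
          by blast
      qed
    qed auto
    also have "\<dots> = (\<Sum>m\<in>{1..n}. (if c (n+1-m) \<ge> 1 then
            (if c(n+1-m := c (n+1-m) - 1) \<in> esf_space (m-1) then esf_weight \<theta> (m-1) (c(n+1-m := c (n+1-m) - 1)) else 0)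
          else 0) * (\<Prod>i\<in>{m..n}. pmf (pp \<theta> i) (i = m)))"
    proof (intro sum.cong refl)
      fix m assume m: "m \<in> {1..n}"
      have "measure_pmf.prob (Q \<theta> {1..m-1}) {l. c (n+1-m) \<ge> 1 \<and> spv (m-1) l = c(n+1-m := c (n+1-m) - 1)}
          = (if c (n+1-m) \<ge> 1 then
            (if c(n+1-m := c (n+1-m) - 1) \<in> esf_space (m-1) then esf_weight \<theta> (m-1) (c(n+1-m := c (n+1-m) - 1)) else 0)
          else 0)"
        by (rule aux) (use m in auto)
      then show "measure_pmf.prob (Q \<theta> {1..n}) (E m) = (if c (n+1-m) \<ge> 1 then
            (if c(n+1-m := c (n+1-m) - 1) \<in> esf_space (m-1) then esf_weight \<theta> (m-1) (c(n+1-m := c (n+1-m) - 1)) else 0)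
          else 0) * (\<Prod>i\<in>{m..n}. pmf (pp \<theta> i) (i = m))"
      proof -
        have mm: "1 \<le> m" "m \<le> n" using m by auto
        show ?thesis unfolding E_def top_event[OF th mm] top_prob[OF th mm] by (simp only: \<open>measure_pmf.prob (Q \<theta> {1..m-1}) _ = _\<close>)
      qed
    qed
    also have "\<dots> = (if c \<in> esf_space n then esf_weight \<theta> n c else 0)"
      by (rule esf_sum[OF th n])
    finally show ?thesis .
  qed
qed



lemma prob_cond:
  assumes ne: "set_pmf p \<inter> s \<noteq> {}"
  shows "measure_pmf.prob (cond_pmf p s) A = measure_pmf.prob p (s \<inter> A) / measure_pmf.prob p s"
proof -
  have "measure_pmf (cond_pmf p s) = uniform_measure (measure_pmf p) s"
    by (rule cond_pmf.rep_eq[OF ne])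
  moreover have "emeasure (measure_pmf p) s \<noteq> 0" by (rule emeasure_measure_pmf_not_zero[OF ne])
  moreover have "emeasure (measure_pmf p) s \<noteq> \<infinity>" by (simp add: measure_pmf.emeasure_eq_measure)
  ultimately show ?thesis by simp
qed

lemma witness:
  assumes th: "\<theta> > 0" and n: "n \<ge> 2"
  shows "(\<lambda>i. i = 1) \<in> set_pmf (Q \<theta> {1..n}) \<inter> Delta n"
proof -
  have "(\<lambda>i. i = 1) \<in> PiE_dflt {1..n} False (set_pmf \<circ> pp \<theta>)"
    unfolding PiE_dflt_def
  proof (safe)
    fix x assume x: "x \<in> {1..n}"
    show "(x = 1) \<in> (set_pmf \<circ> pp \<theta>) x"
    proof (cases "x = 1")
      case True thus ?thesis using pp1[OF th] by simp
    next
      case False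
      hence "x \<ge> 2" using x by auto
      hence "\<theta> / (\<theta> + real x - 1) < 1" "\<theta> / (\<theta> + real x - 1) > 0" using th by auto
      thus ?thesis by (simp add: pp_def)
    qed
  qed (use n in auto)
  hence "(\<lambda>i. i = 1) \<in> set_pmf (Q \<theta> {1..n})" by (simp add: Q_def set_Pi_pmf)
  moreover have "(\<lambda>i. i = (1::nat)) \<in> Delta n" using n by (auto simp: Delta_def)
  ultimately show ?thesis by blast
qed

lemma finite_esf: "finite (esf_space n)"
proof -
  have "esf_space n \<subseteq> {f. \<forall>x. (x \<in> {1..n} \<longrightarrow> f x \<in> {0..n}) \<and> (x \<notin> {1..n} \<longrightarrow> f x = 0)}"
  proof (safe)
    fix c x assume c: "c \<in> esf_space n" and x: "x \<in> {1..n}"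
    have "x * c x \<le> n" using one_le_sum[OF x, of c] c by (simp add: esf_space_def)
    moreover have "c x \<le> x * c x" using x by simp
    ultimately have "c x \<le> n" by linarith
    thus "c x \<in> {0..n}" by simp
  qed (auto simp: esf_space_def)
  thus ?thesis by (rule finite_subset) (intro finite_set_of_finite_funs; simp)
qed

lemma supp_esf:
  assumes th: "\<theta> > 0" and a: "a \<in> set_pmf (Q \<theta> {1..n})"
  shows "spv n a \<in> esf_space n"
proof (rule ccontr)
  assume "spv n a \<notin> esf_space n"
  hence "measure_pmf.prob (Q \<theta> {1..n}) {b. spv n b = spv n a} = 0" using feller[OF th, of n "spv n a"] by simp
  moreover have "measure_pmf.prob (Q \<theta> {1..n}) {b. spv n b = spv n a} > 0"
    by (rule measure_pmf_posI[OF a]) simp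
  ultimately show False by simp
qed

lemma prob_spv:
  assumes th: "\<theta> > 0"
  shows "measure_pmf.prob (Q \<theta> {1..n}) {a. spv n a \<in> B} = esf_prob \<theta> n B"
proof -
  have "measure_pmf.prob (Q \<theta> {1..n}) {a. spv n a \<in> B}
      = measure_pmf.prob (Q \<theta> {1..n}) (\<Union>C\<in>esf_space n \<inter> B. {a. spv n a = C})"
    by (rule prob_cong_set) (use supp_esf[OF th] in auto)
  also have "\<dots> = (\<Sum>C\<in>esf_space n \<inter> B. measure_pmf.prob (Q \<theta> {1..n}) {a. spv n a = C})"
    by (rule measure_pmf.finite_measure_finite_Union)
       (auto simp: disjoint_family_on_def intro: finite_subset[OF _ finite_esf])
  also have "\<dots> = (\<Sum>C\<in>esf_space n \<inter> B. esf_weight \<theta> n C)"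
  proof (intro sum.cong refl)
    fix C assume "C \<in> esf_space n \<inter> B"
    thus "measure_pmf.prob (Q \<theta> {1..n}) {a. spv n a = C} = esf_weight \<theta> n C"
      using feller[OF th, of n C] by simp
  qed
  finally show ?thesis by (simp add: esf_prob_def)
qed

lemma Delta_sp1:
  assumes n: "n \<ge> 1" and a1: "a 1"
  shows "a \<in> Delta n \<longleftrightarrow> spacings n a 1 = 0"
proof -
  let ?S = "{i \<in> {1+1..n+1}. eta_ext n a i \<and> eta_ext n a (i - 1) \<and> (\<forall>k\<in>{i-1+1..i-1}. \<not> eta_ext n a k)}"
  have fin: "finite ?S" by simp
  have "spacings n a 1 = card ?S" by (simp add: spacings_def)
  hence "spacings n a 1 = 0 \<longleftrightarrow> ?S = {}" using fin by simp
  also have "?S = {} \<longleftrightarrow> (\<forall>i\<in>{2..n+1}. \<not> (eta_ext n a i \<and> eta_ext n a (i - 1)))"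
    by auto
  also have "\<dots> \<longleftrightarrow> \<not> a n \<and> (\<forall>i\<in>{2..n}. \<not> (a i \<and> a (i - 1)))"
  proof -
    have "{2..n+1} = insert (n+1) {2..n}" using n by auto
    moreover have "\<forall>i\<in>{2..n}. eta_ext n a i = a i \<and> eta_ext n a (i - 1) = a (i - 1)"
      by (auto simp: eta_ext_def)
    moreover have "eta_ext n a (n+1)" "eta_ext n a n = a n" by (auto simp: eta_ext_def)
    ultimately show ?thesis by auto
  qed
  finally show ?thesis using a1 by (auto simp: Delta_def)
qed



lemma ratio_alg: "k > 0 \<Longrightarrow> x / (y + t / k * z) = k * x / (k * y + t * (z::real))"
proof -
  assume k: "k > 0"
  have "y + t / k * z = (k * y + t * z) / k" using k by (simp add: field_simps)
  thus ?thesis using k by simp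
qed

theorem theorem1:
  fixes \<theta> :: real and n :: nat
  assumes "\<theta> > 0" and "n \<ge> 3"
  defines "P \<equiv> measure_pmf.prob (eta_pmf \<theta> n)"
  shows "P {a. \<not> a n} = 1
    \<and> (\<forall>r\<in>{3..n-1}. \<forall>h :: nat \<Rightarrow> bool. \<forall>b :: bool.
          P {a. \<forall>k\<in>{r+1..n+1}. eta_ext n a k = h k} > 0 \<longrightarrow>
          P {a. a r = b \<and> (\<forall>k\<in>{r+1..n+1}. eta_ext n a k = h k)}
            / P {a. \<forall>k\<in>{r+1..n+1}. eta_ext n a k = h k}
          = trans_prob \<theta> r (h (r + 1)) b)
    \<and> P {a. \<not> a 2} = 1
    \<and> P {a. a 1} = 1
    \<and> (\<forall>c :: nat \<Rightarrow> nat.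
          P {a. \<forall>j\<in>{2..n}. spacings n a j = c j}
          = esf_prob \<theta> n {C. C 1 = 0 \<and> (\<forall>j\<in>{2..n}. C j = c j)} / esf_prob \<theta> n {C. C 1 = 0})"
proof -
  note th = assms(1)
  have n2: "n \<ge> 2" using assms(2) by simp
  define M where "M = Q \<theta> {1..n}"
  have ne: "set_pmf M \<inter> Delta n \<noteq> {}" using witness[OF th n2] unfolding M_def by (metis empty_iff)
  have PX: "P X = measure_pmf.prob M (Delta n \<inter> X) / measure_pmf.prob M (Delta n)" for X
    unfolding P_def eta_pmf_def xi_Q M_def[symmetric] by (rule prob_cond[OF ne])
  have pD: "measure_pmf.prob M (Delta n) > 0"
    using witness[OF th n2] unfolding M_def by (intro measure_pmf_posI[of "\<lambda>i. i = 1"]) auto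
  have full: "P X = 1" if "Delta n \<subseteq> X" for X
  proof -
    have "Delta n \<inter> X = Delta n" using that by blast
    thus ?thesis using PX[of X] pD by simp
  qed
  have A1: "P {a. \<not> a n} = 1" by (rule full) (auto simp: Delta_def)
  have A3: "P {a. \<not> a 2} = 1"
  proof (rule full, safe)
    fix a assume "a \<in> Delta n" "a 2"
    moreover have "2 \<in> {2..n}" using n2 by simp
    ultimately show False by (force simp: Delta_def)
  qed
  have A4: "P {a. a 1} = 1" by (rule full) (auto simp: Delta_def)
  have A2: "\<forall>r\<in>{3..n-1}. \<forall>h :: nat \<Rightarrow> bool. \<forall>b :: bool.
          P {a. \<forall>k\<in>{r+1..n+1}. eta_ext n a k = h k} > 0 \<longrightarrow>
          P {a. a r = b \<and> (\<forall>k\<in>{r+1..n+1}. eta_ext n a k = h k)}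
            / P {a. \<forall>k\<in>{r+1..n+1}. eta_ext n a k = h k}
          = trans_prob \<theta> r (h (r + 1)) b"
  proof (intro ballI allI impI)
    fix r h b assume r: "r \<in> {3..n-1}" and pos: "P {a. \<forall>k\<in>{r+1..n+1}. eta_ext n a k = h k} > 0"
    have r1: "1 \<le> r" "r + 1 \<le> n" using r by auto
    define U where "U = measure_pmf.prob (Q \<theta> {r+1..n}) {u. (\<forall>k\<in>{r+1..n+1}. eta_ext n u k = h k) \<and> \<not> u n \<and> (\<forall>i\<in>{r+2..n}. \<not> (u i \<and> u (i - 1)))}"
    define L where "L = (\<lambda>B. measure_pmf.prob (Q \<theta> {1..r}) {l. l \<in> V r \<and> \<not> (h (r+1) \<and> l r) \<and> B (l r)})"
    have fac: "measure_pmf.prob M {a. (\<forall>k\<in>{r+1..n+1}. eta_ext n a k = h k) \<and> a \<in> Delta n \<and> B (a r)} = U * L B" for B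
      unfolding M_def U_def L_def by (rule factor[OF th r1])
    have e1: "Delta n \<inter> {a. a r = b \<and> (\<forall>k\<in>{r+1..n+1}. eta_ext n a k = h k)}
        = {a. (\<forall>k\<in>{r+1..n+1}. eta_ext n a k = h k) \<and> a \<in> Delta n \<and> (\<lambda>x. x = b) (a r)}" by blast
    have e2: "Delta n \<inter> {a. \<forall>k\<in>{r+1..n+1}. eta_ext n a k = h k}
        = {a. (\<forall>k\<in>{r+1..n+1}. eta_ext n a k = h k) \<and> a \<in> Delta n \<and> (\<lambda>x. True) (a r)}" by blast
    have num: "P {a. a r = b \<and> (\<forall>k\<in>{r+1..n+1}. eta_ext n a k = h k)} = U * L (\<lambda>x. x = b) / measure_pmf.prob M (Delta n)"
    proof -
      have "measure_pmf.prob M (Delta n \<inter> {a. a r = b \<and> (\<forall>k\<in>{r+1..n+1}. eta_ext n a k = h k)}) = U * L (\<lambda>x. x = b)"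
        unfolding e1 by (rule fac)
      thus ?thesis by (simp only: PX)
    qed
    have den: "P {a. \<forall>k\<in>{r+1..n+1}. eta_ext n a k = h k} = U * L (\<lambda>x. True) / measure_pmf.prob M (Delta n)"
      using PX[of "{a. \<forall>k\<in>{r+1..n+1}. eta_ext n a k = h k}"] e2 fac[of "\<lambda>x. True"] by simp
    have UL: "U \<noteq> 0" "L (\<lambda>x. True) \<noteq> 0" using pos den pD by auto
    have ratio: "P {a. a r = b \<and> (\<forall>k\<in>{r+1..n+1}. eta_ext n a k = h k)} / P {a. \<forall>k\<in>{r+1..n+1}. eta_ext n a k = h k}
        = L (\<lambda>x. x = b) / L (\<lambda>x. True)"
      unfolding num den using UL pD by simp
    have r2: "r \<ge> 2" "r - 1 \<ge> 1" using r by auto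
    show "P {a. a r = b \<and> (\<forall>k\<in>{r+1..n+1}. eta_ext n a k = h k)} / P {a. \<forall>k\<in>{r+1..n+1}. eta_ext n a k = h k}
        = trans_prob \<theta> r (h (r + 1)) b"
      unfolding ratio
    proof (cases "h (r+1)")
      case True
      show "L (\<lambda>x. x = b) / L (\<lambda>x. True) = trans_prob \<theta> r (h (r + 1)) b"
      proof (cases b)
        case True
        have "L (\<lambda>x. x = b) = 0" using True \<open>h (r+1)\<close> by (simp add: L_def)
        thus ?thesis using True \<open>h (r+1)\<close> by (simp add: trans_prob_def)
      next
        case False
        have "L (\<lambda>x. x = b) = L (\<lambda>x. True)" unfolding L_def using False \<open>h (r+1)\<close>
          by (intro arg_cong[where f="measure_pmf.prob _"]) auto
        thus ?thesis using False \<open>h (r+1)\<close> UL by (simp add: trans_prob_def)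
      qed
    next
      case False
      have LT: "L (\<lambda>x. True) = measure_pmf.prob (Q \<theta> {1..r}) (V r)"
        unfolding L_def using False by simp
      have Dr: "measure_pmf.prob (Q \<theta> {1..r}) (Delta r) = lam \<theta> r" by (rule qq_lam[OF th]) (use r in auto)
      have Dr1: "measure_pmf.prob (Q \<theta> {1..r-1}) (Delta (r-1)) = lam \<theta> (r-1)" by (rule qq_lam[OF th r2(2)])
      have VT: "measure_pmf.prob (Q \<theta> {1..r}) {a \<in> V r. a r} = \<theta> / (\<theta> + real r - 1) * lam \<theta> (r-1)"
        using probA[OF th r2(1)] Dr1 by simp
      have Vr: "measure_pmf.prob (Q \<theta> {1..r}) (V r) = lam \<theta> r + \<theta> / (\<theta> + real r - 1) * lam \<theta> (r-1)"
        using probC[OF th, of r] Dr VT by simp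
      have k: "\<theta> + real r - 1 > 0" using th r by auto
      show "L (\<lambda>x. x = b) / L (\<lambda>x. True) = trans_prob \<theta> r (h (r + 1)) b"
      proof (cases b)
        case True
        have "L (\<lambda>x. x = b) = measure_pmf.prob (Q \<theta> {1..r}) {a \<in> V r. a r}"
          unfolding L_def using True False by (intro arg_cong[where f="measure_pmf.prob _"]) auto
        thus ?thesis unfolding LT Vr VT using True False ratio_alg[OF k] k
          by (simp add: trans_prob_def Let_def)
      next
        case b: False
        have "L (\<lambda>x. x = b) = measure_pmf.prob (Q \<theta> {1..r}) (Delta r)"
          unfolding L_def using b False by (intro arg_cong[where f="measure_pmf.prob _"]) (auto simp: Delta_V)
        thus ?thesis unfolding LT Vr Dr using b False ratio_alg[OF k] k
          by (simp add: trans_prob_def Let_def)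
      qed
    qed
  qed
  have A5: "\<forall>c :: nat \<Rightarrow> nat.
          P {a. \<forall>j\<in>{2..n}. spacings n a j = c j}
          = esf_prob \<theta> n {C. C 1 = 0 \<and> (\<forall>j\<in>{2..n}. C j = c j)} / esf_prob \<theta> n {C. C 1 = 0}"
  proof
    fix c :: "nat \<Rightarrow> nat"
    have n1: "n \<ge> 1" using n2 by simp
    have sup: "f 1" if "f \<in> set_pmf M" for f using supp_Q(2)[OF th _ that[unfolded M_def]] n1 by auto
    have s1: "spv n f 1 = spacings n f 1" for f using n1 by (simp add: spv_def)
    have sj: "\<forall>j\<in>{2..n}. spv n f j = spacings n f j" for f by (simp add: spv_def)
    have "measure_pmf.prob M (Delta n \<inter> {a. \<forall>j\<in>{2..n}. spacings n a j = c j})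
        = measure_pmf.prob M {a. spv n a \<in> {C. C 1 = 0 \<and> (\<forall>j\<in>{2..n}. C j = c j)}}"
    proof (rule prob_cong_set)
      fix f assume f: "f \<in> set_pmf M"
      show "f \<in> Delta n \<inter> {a. \<forall>j\<in>{2..n}. spacings n a j = c j} \<longleftrightarrow> f \<in> {a. spv n a \<in> {C. C 1 = 0 \<and> (\<forall>j\<in>{2..n}. C j = c j)}}"
        using Delta_sp1[of n f, OF n1 sup[OF f]] s1[of f] sj[of f] by auto
    qed
    also have "\<dots> = esf_prob \<theta> n {C. C 1 = 0 \<and> (\<forall>j\<in>{2..n}. C j = c j)}"
      unfolding M_def by (rule prob_spv[OF th])
    finally have a: "measure_pmf.prob M (Delta n \<inter> {a. \<forall>j\<in>{2..n}. spacings n a j = c j}) = esf_prob \<theta> n {C. C 1 = 0 \<and> (\<forall>j\<in>{2..n}. C j = c j)}" .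
    have "measure_pmf.prob M (Delta n) = measure_pmf.prob M {a. spv n a \<in> {C. C 1 = 0}}"
    proof (rule prob_cong_set)
      fix f assume f: "f \<in> set_pmf M"
      show "f \<in> Delta n \<longleftrightarrow> f \<in> {a. spv n a \<in> {C. C 1 = 0}}"
        using Delta_sp1[of n f, OF n1 sup[OF f]] s1[of f] by auto
    qed
    also have "\<dots> = esf_prob \<theta> n {C. C 1 = 0}"
      unfolding M_def by (rule prob_spv[OF th])
    finally have b: "measure_pmf.prob M (Delta n) = esf_prob \<theta> n {C. C 1 = 0}" .
    show "P {a. \<forall>j\<in>{2..n}. spacings n a j = c j}
          = esf_prob \<theta> n {C. C 1 = 0 \<and> (\<forall>j\<in>{2..n}. C j = c j)} / esf_prob \<theta> n {C. C 1 = 0}"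
      using PX a b by simp
  qed
  show ?thesis using A1 A2 A3 A4 A5 by blast
qed


end
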